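(* Let $n\mid(q-1)$, let $\delta\ge2$, $b\ge1$, $s\ge1$, $m\ge1$ be integers with $\gcd(b,n)=1$, and let $t\in\{0,1,\dots,n-1\}$. Let $i_1<i_2<\dots<i_s$ be integers with $m-1+\delta\le i_1$, $i_s\le n-\delta$ and $i_{\ell+1}-i_\ell\ge\delta$ for $\ell=1,\dots,s-1$. Put $$A=\{\alpha^{t},\alpha^{t+b},\dots,\alpha^{t+(m-1)b},\alpha^{t+i_1b},\alpha^{t+i_2b},\dots,\alpha^{t+i_sb}\},\qquad B=\{1,\alpha^{b},\alpha^{2b},\dots,\alpha^{(\delta-2)b}\}.$$ Let $d_A^{\perp}$ be the minimum distance of the dual of $C_A$. Then $C_{AB}$ is a cyclic $(d_A^{\perp}-\delta+1,\delta)$-LRC of length $n$ over $\mathbb{F}_q$ with dimension $k=n-m+1-(s+1)(\delta-1)$. Moreover, if $\lceil k/r\rceil=s+1$ where $r=d_A^{\perp}-\delta+1$, then $C_{AB}$ is an optimal $(r,\delta)$-LRC with minimum distance $m+\delta-1$.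
   Context: Let $q$ be a prime power and $n\mid(q-1)$, so the set $R_n$ of all $n$-th roots of unity lies in $\mathbb{F}_q$; let $\alpha\in\mathbb{F}_q$ be a primitive $n$-th root of unity. For $A,B\subseteq R_n$, $AB=\{\beta\gamma:\beta\in A,\gamma\in B\}$, and for $Z\subseteq R_n$, $C_Z$ denotes the cyclic code of length $n$ over $\mathbb{F}_q$ with complete defining set $Z$, i.e. the ideal generated by $\prod_{\beta\in Z}(x-\beta)$ in $\mathbb{F}_q[x]/(x^n-1)$, identified with a subspace of $\mathbb{F}_q^n$; it has dimension $n-|Z|$. Locality: for a linear code $C\subseteq\mathbb{F}_q^n$ and integers $r\ge1$, $\delta\ge2$, the $i$-th coordinate has $(r,\delta)$-locality if there is $S_i\subseteq\{1,\dots,n\}$ with $i\in S_i$, $|S_i|\le r+\delta-1$ such that the punctured code $C|_{S_i}$ has minimum distance at least $\delta$; $C$ is an $(r,\delta)$-LRC if every coordinate has $(r,\delta)$-locality. An $[n,k,d]$ $(r,\delta)$-LRC is optimal if $d=n-k-(\lceil k/r\rceil-1)(\delta-1)+1$ (this quantity is always an upper bound on $d$). *)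

theory Defs
  imports Complex_Main "HOL-Computational_Algebra.Polynomial" "HOL-Library.Function_Algebras"
begin

(* Words of length n over 'a are functions nat => 'a vanishing outside {0..<n};
   coordinates are indexed 0..n-1. *)

definition word_poly :: "nat \<Rightarrow> (nat \<Rightarrow> 'a::field) \<Rightarrow> 'a poly" where
  "word_poly n c = (\<Sum>i<n. monom (c i) i)"

definition xn1 :: "nat \<Rightarrow> 'a::field poly" where
  "xn1 n = monom 1 n - 1"

(* cyclic code with complete defining set Z: the ideal generated by prod_{beta in Z} (x - beta)
   in F[x]/(x^n - 1), identified with coefficient vectors of the reduced representatives *)
definition cyclic_code :: "nat \<Rightarrow> 'a::field set \<Rightarrow> (nat \<Rightarrow> 'a) set" where
  "cyclic_code n Z = {c. (\<forall>i\<ge>n. c i = 0) \<and>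
      (\<exists>f. word_poly n c = ((\<Prod>\<beta>\<in>Z. [:-\<beta>, 1:]) * f) mod xn1 n)}"

definition dual_code :: "nat \<Rightarrow> (nat \<Rightarrow> 'a::field) set \<Rightarrow> (nat \<Rightarrow> 'a) set" where
  "dual_code n C = {y. (\<forall>i\<ge>n. y i = 0) \<and> (\<forall>c\<in>C. (\<Sum>i<n. c i * y i) = 0)}"

definition wt :: "nat set \<Rightarrow> (nat \<Rightarrow> 'a::zero) \<Rightarrow> nat" where
  "wt I c = card {i\<in>I. c i \<noteq> 0}"

definition min_dist :: "nat set \<Rightarrow> (nat \<Rightarrow> 'a::zero) set \<Rightarrow> nat" where
  "min_dist I C = Inf {wt I c | c. c \<in> C \<and> wt I c \<noteq> 0}"

definition puncture :: "nat set \<Rightarrow> (nat \<Rightarrow> 'a::zero) set \<Rightarrow> (nat \<Rightarrow> 'a) set" where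
  "puncture S C = (\<lambda>c i. if i \<in> S then c i else 0) ` C"

definition has_locality :: "nat \<Rightarrow> (nat \<Rightarrow> 'a::zero) set \<Rightarrow> nat \<Rightarrow> nat \<Rightarrow> nat \<Rightarrow> bool" where
  "has_locality n C r \<delta> i \<longleftrightarrow> (\<exists>S. S \<subseteq> {..<n} \<and> i \<in> S \<and> card S \<le> r + \<delta> - 1 \<and>
      min_dist S (puncture S C) \<ge> \<delta>)"

definition is_LRC :: "nat \<Rightarrow> (nat \<Rightarrow> 'a::zero) set \<Rightarrow> nat \<Rightarrow> nat \<Rightarrow> bool" where
  "is_LRC n C r \<delta> \<longleftrightarrow> r \<ge> 1 \<and> \<delta> \<ge> 2 \<and> (\<forall>i<n. has_locality n C r \<delta> i)"

definition code_dim :: "(nat \<Rightarrow> 'a::field) set \<Rightarrow> nat" where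
  "code_dim C = vector_space.dim (\<lambda>a v i. a * v i) C"

definition is_optimal_LRC :: "nat \<Rightarrow> (nat \<Rightarrow> 'a::field) set \<Rightarrow> nat \<Rightarrow> nat \<Rightarrow> bool" where
  "is_optimal_LRC n C r \<delta> \<longleftrightarrow> is_LRC n C r \<delta> \<and>
     int (min_dist {..<n} C) = int n - int (code_dim C)
        - (\<lceil>real (code_dim C) / real r\<rceil> - 1) * (int \<delta> - 1) + 1"

definition set_prod :: "'a::times set \<Rightarrow> 'a set \<Rightarrow> 'a set" where
  "set_prod A B = {x * y | x y. x \<in> A \<and> y \<in> B}"

end

theory Submission
  imports Defs
begin


definition fin :: "nat \<Rightarrow> (nat \<Rightarrow> 'a::zero) \<Rightarrow> bool" where
  "fin n c \<longleftrightarrow> (\<forall>i\<ge>n. c i = 0)"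

definition ev :: "nat \<Rightarrow> (nat \<Rightarrow> 'a::field) \<Rightarrow> 'a \<Rightarrow> 'a" where
  "ev n c z = (\<Sum>i<n. c i * z ^ i)"

definition gpol :: "'a::field set \<Rightarrow> 'a poly" where
  "gpol Z = (\<Prod>\<beta>\<in>Z. [:-\<beta>, 1:])"

lemma coeff_word_poly: "coeff (word_poly n c) k = (if k < n then c k else 0)"
  unfolding word_poly_def by (simp add: coeff_sum)

lemma coeff_word_poly_fin: "fin n c \<Longrightarrow> coeff (word_poly n c) k = c k"
  by (simp add: coeff_word_poly fin_def)

lemma poly_word_poly: "poly (word_poly n c) z = ev n c z"
  unfolding word_poly_def ev_def by (simp add: poly_sum poly_monom)

lemma degree_word_poly: "n > 0 \<Longrightarrow> degree (word_poly n c) < n"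
proof -
  assume "n > 0"
  have "degree (word_poly n c) \<le> n - 1"
    by (rule degree_le) (auto simp: coeff_word_poly)
  thus ?thesis using \<open>n > 0\<close> by linarith
qed

lemma poly_xn1: "poly (xn1 n) z = z ^ n - 1"
  by (simp add: xn1_def poly_monom)

lemma degree_xn1: "n > 0 \<Longrightarrow> degree (xn1 n :: 'a::field poly) = n"
proof -
  assume "n > 0"
  have "xn1 n = monom (1::'a) n + (- 1)" by (simp add: xn1_def)
  also have "degree \<dots> = n"
    using \<open>n > 0\<close> by (subst degree_add_eq_left) (auto simp: degree_monom_eq)
  finally show ?thesis .
qed

lemma word_poly_of_coeff:
  assumes "degree p < n"
  shows "word_poly n (coeff p) = p"
  by (rule poly_eqI) (use assms in \<open>auto simp: coeff_word_poly coeff_eq_0\<close>)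

lemma gpol_dvd:
  assumes "finite Z" "\<forall>z\<in>Z. poly p z = 0"
  shows "gpol Z dvd p"
  using assms
proof (induction Z rule: finite_induct)
  case empty thus ?case by (simp add: gpol_def)
next
  case (insert x F)
  then obtain q where q: "p = gpol F * q" by (auto elim: dvdE)
  have "poly (gpol F) x \<noteq> 0"
    using insert(1,2) by (auto simp: gpol_def poly_prod)
  moreover have "poly p x = 0" using insert by auto
  ultimately have "poly q x = 0" using q by simp
  then have "[:-x,1:] dvd q" by (simp add: poly_eq_0_iff_dvd)
  then obtain q' where "q = [:-x,1:] * q'" by (auto elim: dvdE)
  moreover have g: "gpol (insert x F) = [:-x,1:] * gpol F" unfolding gpol_def using insert(1,2) by (rule prod.insert)
  ultimately have "p = gpol (insert x F) * q'" using q by (simp only: ac_simps)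
  then show ?case by simp
qed

lemma cyc_iff:
  fixes Z :: "'a::{field,finite} set"
  assumes "n > 0" "\<forall>z\<in>Z. z ^ n = 1"
  shows "c \<in> cyclic_code n Z \<longleftrightarrow> fin n c \<and> (\<forall>z\<in>Z. ev n c z = 0)"
proof
  assume "c \<in> cyclic_code n Z"
  then obtain f where f: "fin n c" "word_poly n c = (gpol Z * f) mod xn1 n"
    by (auto simp: cyclic_code_def fin_def gpol_def)
  have "word_poly n c = gpol Z * f - xn1 n * ((gpol Z * f) div xn1 n)"
    using f(2) by (simp add: mod_div_mult_eq minus_div_mult_eq_mod[symmetric] mult_ac)
  moreover have "poly (gpol Z) z = 0" if "z \<in> Z" for z
    using that by (auto simp: gpol_def poly_prod)
  ultimately show "fin n c \<and> (\<forall>z\<in>Z. ev n c z = 0)"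
    using f(1) assms(2) by (auto simp: poly_word_poly[symmetric] poly_xn1)
next
  assume h: "fin n c \<and> (\<forall>z\<in>Z. ev n c z = 0)"
  then have "gpol Z dvd word_poly n c"
    by (intro gpol_dvd) (auto simp: poly_word_poly)
  then obtain f where f: "word_poly n c = gpol Z * f" by (auto elim: dvdE)
  have "word_poly n c mod xn1 n = word_poly n c"
    using assms(1) by (intro mod_poly_less) (simp add: degree_xn1 degree_word_poly)
  then show "c \<in> cyclic_code n Z"
  proof -
    have "word_poly n c = (gpol Z * f) mod xn1 n" using f \<open>word_poly n c mod xn1 n = word_poly n c\<close> by simp
    then show ?thesis using h unfolding cyclic_code_def fin_def gpol_def by blast
  qed
qed



interpretation fv: vector_space "\<lambda>(a::'a::field) (v::nat \<Rightarrow> 'a) i. a * v i"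
  by unfold_locales (auto simp: algebra_simps fun_eq_iff)

lemma sum_fun_apply: "(\<Sum>j\<in>J. f j) (i::nat) = (\<Sum>j\<in>J. f j i)"
  by (induction J rule: infinite_finite_induct) auto

definition unitv :: "nat \<Rightarrow> nat \<Rightarrow> 'a::field" where
  "unitv j = (\<lambda>i. if i = j then 1 else 0)"

lemma fin_span:
  "{c. fin n c} \<subseteq> fv.span (unitv ` {..<n} :: (nat \<Rightarrow> 'a::field) set)"
proof
  fix c :: "nat \<Rightarrow> 'a" assume "c \<in> {c. fin n c}"
  then have c: "fin n c" by simp
  have "c = (\<Sum>j<n. (\<lambda>i. c j * unitv j i))"
  proof
    fix i
    show "c i = (\<Sum>j<n. (\<lambda>i. c j * unitv j i)) i"
    proof (cases "i < n")
      case True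
      then show ?thesis by (simp add: sum_fun_apply unitv_def if_distrib cong: if_cong)
    next
      case False
      then show ?thesis using c by (auto simp: sum_fun_apply unitv_def fin_def)
    qed
  qed
  also have "\<dots> \<in> fv.span (unitv ` {..<n})"
    by (intro fv.span_sum fv.span_scale fv.span_base) auto
  finally show "c \<in> fv.span (unitv ` {..<n})" .
qed

lemma indep_fin_finite:
  assumes "fv.independent S" "S \<subseteq> {c. fin n c}"
  shows "finite (S :: (nat \<Rightarrow> 'a::field) set)"
  using fv.independent_span_bound[of "unitv ` {..<n}" S] assms fin_span[of n] by auto

lemma dim_pos_nonzero:
  assumes "fv.dim V \<ge> 1"
  shows "\<exists>v\<in>(V::(nat \<Rightarrow> 'a::field) set). v \<noteq> 0"
proof (rule ccontr)
  assume "\<not> ?thesis"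
  then have "V \<subseteq> fv.span {}" by (auto simp: fv.span_empty)
  then have "fv.dim V \<le> card ({}::(nat \<Rightarrow> 'a) set)" by (intro fv.dim_le_card) auto
  thus False using assms by simp
qed

lemma dim_hyper:
  assumes V: "fv.subspace V" "V \<subseteq> {c. fin n c}"
  shows "fv.dim (V::(nat \<Rightarrow> 'a::field) set) \<le> fv.dim {c\<in>V. c j = 0} + 1"
proof -
  let ?V' = "{c\<in>V. c j = 0}"
  obtain B where B: "B \<subseteq> ?V'" "fv.independent B" "?V' \<subseteq> fv.span B" "card B = fv.dim ?V'"
    using fv.basis_exists by blast
  have fB: "finite B" using indep_fin_finite[OF B(2)] B(1) V(2) by blast
  show ?thesis
  proof (cases "\<exists>v\<in>V. v j \<noteq> 0")
    case False
    then have "V = ?V'" by auto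
    then show ?thesis by simp
  next
    case True
    then obtain v where v: "v \<in> V" "v j \<noteq> 0" by blast
    have "V \<subseteq> fv.span (insert v B)"
    proof
      fix w assume w: "w \<in> V"
      define a where "a = w j / v j"
      have "w - (\<lambda>i. a * v i) \<in> V"
        using w v V(1) by (intro fv.subspace_diff fv.subspace_scale) auto
      moreover have "(w - (\<lambda>i. a * v i)) j = 0" using v(2) by (simp add: a_def)
      ultimately have "w - (\<lambda>i. a * v i) \<in> fv.span B" using B(3) by auto
      then show "w \<in> fv.span (insert v B)"
        by (subst fv.span_breakdown_eq) blast
    qed
    then have "fv.dim V \<le> card (insert v B)" using fB by (intro fv.dim_le_card) auto
    also have "\<dots> \<le> card B + 1" using fB by (simp add: card_insert_if)
    finally show ?thesis using B(4) by simp
  qed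
qed



lemma gpol_degree: "finite Z \<Longrightarrow> degree (gpol Z) = card Z"
  unfolding gpol_def by (subst degree_prod_sum_eq) auto

lemma gpol_lead: "coeff (gpol Z) (degree (gpol Z)) = 1"
  unfolding gpol_def by (simp add: lead_coeff_prod)

definition vecg :: "'a::field set \<Rightarrow> nat \<Rightarrow> nat \<Rightarrow> 'a" where
  "vecg Z j = coeff (monom 1 j * gpol Z)"

lemma vecg_top:
  assumes "finite Z"
  shows "vecg Z j (j + card Z) = 1" "j + card Z < i \<Longrightarrow> vecg Z j i = 0"
    "i < j \<Longrightarrow> vecg Z j i = 0"
  using assms gpol_lead[of Z] by (auto simp: vecg_def coeff_monom_mult gpol_degree coeff_eq_0)

lemma vecg_lt:
  assumes "finite Z" "j < j'"
  shows "vecg Z j (j' + card Z) = 0"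
  using assms vecg_top(2)[of Z j "j' + card Z"] by simp

lemma dim_cyc:
  fixes Z :: "'a::{field,finite} set"
  assumes n: "n > 0" and Z: "\<forall>z\<in>Z. z ^ n = 1" and cZ: "card Z \<le> n"
  shows "fv.dim (cyclic_code n Z) = n - card Z"
proof -
  define d where "d = card Z"
  define B where "B = vecg Z ` {..<n-d}"
  have fZ: "finite Z" by simp
  have g0: "gpol Z \<noteq> 0" by (auto simp: gpol_def)
  have inj: "inj_on (vecg Z) {..<n-d}"
  proof (rule inj_onI)
    fix j j' assume jj: "j \<in> {..<n-d}" "j' \<in> {..<n-d}" "vecg Z j = vecg Z j'"
    show "j = j'"
    proof (rule ccontr)
      assume "j \<noteq> j'"
      then consider "j < j'" | "j' < j" by linarith
      then show False
      proof cases
        case 1 then show False using jj(3) vecg_lt[OF fZ 1] vecg_top(1)[OF fZ, of j'] by (metis zero_neq_one)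
      next
        case 2 then show False using jj(3) vecg_lt[OF fZ 2] vecg_top(1)[OF fZ, of j] by (metis zero_neq_one)
      qed
    qed
  qed
  have degv: "degree (monom 1 j * gpol Z) = j + d" for j :: nat
    using g0 by (simp add: degree_mult_eq degree_monom_eq gpol_degree d_def)
  have BC: "B \<subseteq> cyclic_code n Z"
  proof
    fix v assume "v \<in> B"
    then obtain j where j: "j < n - d" "v = vecg Z j" by (auto simp: B_def)
    have dl: "degree (monom 1 j * gpol Z) < n" using degv[of j] j(1) by simp
    have "fin n v" unfolding fin_def j(2) vecg_def using dl by (auto intro: coeff_eq_0)
    moreover have "word_poly n v = (gpol Z * monom 1 j) mod xn1 n"
      using dl n unfolding j(2) vecg_def
      by (simp add: word_poly_of_coeff mod_poly_less degree_xn1 mult.commute)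
    ultimately show "v \<in> cyclic_code n Z" unfolding cyclic_code_def fin_def gpol_def by blast
  qed
  have CB: "cyclic_code n Z \<subseteq> fv.span B"
  proof
    fix c assume c: "c \<in> cyclic_code n Z"
    then have c': "fin n c" "\<forall>z\<in>Z. ev n c z = 0" using cyc_iff[OF n Z] by auto
    have "gpol Z dvd word_poly n c"
      using c' by (intro gpol_dvd) (auto simp: poly_word_poly)
    then obtain h where h: "word_poly n c = gpol Z * h" by (auto elim: dvdE)
    have cc: "c = coeff (gpol Z * h)" using h coeff_word_poly_fin[OF c'(1)] by auto
    show "c \<in> fv.span B"
    proof (cases "h = 0")
      case True
      have "coeff (0::'a poly) = (\<lambda>_. 0)" by (simp add: fun_eq_iff)
      then show ?thesis using cc fv.span_zero True by (simp add: zero_fun_def)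
    next
      case False
      have "degree (gpol Z * h) < n" using degree_word_poly[OF n, of c] h by simp
      then have dh: "degree h < n - d" using False g0 by (simp add: degree_mult_eq gpol_degree d_def)
      have "c = (\<Sum>j<n-d. (\<lambda>i. coeff h j * vecg Z j i))"
      proof
        fix i
        have "(\<Sum>j<n-d. (\<lambda>i. coeff h j * vecg Z j i)) i
              = coeff (\<Sum>j<n-d. smult (coeff h j) (monom 1 j * gpol Z)) i"
          by (simp add: sum_fun_apply coeff_sum vecg_def)
        also have "(\<Sum>j<n-d. smult (coeff h j) (monom 1 j * gpol Z)) = (\<Sum>j<n-d. monom (coeff h j) j) * gpol Z"
          by (simp add: sum_distrib_right smult_monom_mult)
        also have "(\<Sum>j<n-d. monom (coeff h j) j) = h"
          using word_poly_of_coeff[OF dh] by (simp add: word_poly_def)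
        finally show "c i = (\<Sum>j<n-d. (\<lambda>i. coeff h j * vecg Z j i)) i" using cc by (simp add: mult.commute)
      qed
      also have "\<dots> \<in> fv.span B"
        by (intro fv.span_sum fv.span_scale fv.span_base) (auto simp: B_def)
      finally show ?thesis .
    qed
  qed
  have indep: "fv.independent B"
    unfolding fv.independent_explicit_module
  proof (intro allI impI, rule ccontr)
    fix t u v
    assume t: "finite t" "t \<subseteq> B" "(\<Sum>v\<in>t. (\<lambda>i. u v * v i)) = 0" "v \<in> t" "u v \<noteq> 0"
    define J where "J = {j. j < n - d \<and> vecg Z j \<in> t \<and> u (vecg Z j) \<noteq> 0}"
    have "J \<noteq> {}" using t(2,4,5) by (auto simp: J_def B_def)
    moreover have "finite J" by (auto simp: J_def)
    ultimately have j0: "Max J \<in> J" "\<And>j. j \<in> J \<Longrightarrow> j \<le> Max J" by auto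
    define j0 where "j0 = Max J"
    have "(\<Sum>v\<in>t. (\<lambda>i. u v * v i)) (j0 + d) = (\<Sum>w\<in>t. (if w = vecg Z j0 then u w else 0))"
      unfolding sum_fun_apply
    proof (rule sum.cong[OF refl])
      fix w assume w: "w \<in> t"
      then obtain j where j: "j < n - d" "w = vecg Z j" using t(2) by (auto simp: B_def)
      show "u w * w (j0 + d) = (if w = vecg Z j0 then u w else 0)"
      proof (cases "u w = 0")
        case False
        then have "j \<in> J" using j w by (auto simp: J_def)
        then have "j \<le> j0" using j0 by (simp add: j0_def)
        then consider "j = j0" | "j < j0" by linarith
        then show ?thesis
        proof cases
          case 1 then show ?thesis using j vecg_top(1)[OF fZ] by (simp add: d_def)
        next
          case 2
          have "w \<noteq> vecg Z j0"
            using inj j(1) j0(1)[folded j0_def] 2 unfolding j(2)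
            by (auto simp: J_def inj_on_def) 
          then show ?thesis using vecg_lt[OF fZ 2] j by (simp add: d_def)
        qed
      qed auto
    qed
    also have "\<dots> = u (vecg Z j0)" using j0(1) t(1) by (simp add: J_def j0_def sum.delta)
    finally show False using t(3) j0(1) by (simp add: J_def j0_def)
  qed
  have "card B = n - d" unfolding B_def using inj by (simp add: card_image)
  then show ?thesis using fv.dim_unique[OF BC CB indep] by (simp add: d_def)
qed



lemma vand:
  fixes y z :: "nat \<Rightarrow> 'a::field"
  assumes W: "finite W" "inj_on z W" "card W \<le> e"
    and S: "\<forall>j<e. (\<Sum>i\<in>W. y i * z i ^ j) = 0"
  shows "\<forall>i\<in>W. y i = 0"
proof
  fix q assume q: "q \<in> W"
  define P where "P = (\<Prod>i\<in>W-{q}. [:- z i, 1:])"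
  have dP: "degree P = card W - 1"
    unfolding P_def using W(1) q by (subst degree_prod_sum_eq) auto
  have "(\<Sum>i\<in>W. y i * poly P (z i)) = (\<Sum>i\<in>W. \<Sum>j\<le>degree P. y i * (coeff P j * z i ^ j))"
    by (simp add: poly_altdef sum_distrib_left)
  also have "\<dots> = (\<Sum>j\<le>degree P. coeff P j * (\<Sum>i\<in>W. y i * z i ^ j))"
    by (subst sum.swap) (simp add: sum_distrib_left mult_ac)
  also have "\<dots> = 0"
  proof (rule sum.neutral, rule ballI)
    fix j assume "j \<in> {..degree P}"
    then have "j < e" using dP W(3) q W(1) card_gt_0_iff[of W] by auto
    then show "coeff P j * (\<Sum>i\<in>W. y i * z i ^ j) = 0" using S by simp
  qed
  finally have s0: "(\<Sum>i\<in>W. y i * poly P (z i)) = 0" .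
  have "(\<Sum>i\<in>W. y i * poly P (z i)) = (\<Sum>i\<in>W. if i = q then y q * poly P (z q) else 0)"
  proof (rule sum.cong[OF refl])
    fix i assume i: "i \<in> W"
    show "y i * poly P (z i) = (if i = q then y q * poly P (z q) else 0)"
    proof (cases "i = q")
      case False
      then have "poly P (z i) = 0" using i W(1) by (auto simp: P_def poly_prod)
      then show ?thesis using False by simp
    qed simp
  qed
  also have "\<dots> = y q * poly P (z q)" using W(1) q by (simp add: sum.delta)
  finally have "y q * poly P (z q) = 0" using s0 by simp
  moreover have "poly P (z q) \<noteq> 0"
    using W q by (auto simp: P_def poly_prod inj_on_def)
  ultimately show "y q = 0" by simp
qed



definition Dsub :: "(nat \<Rightarrow> 'a::field) set \<Rightarrow> nat set \<Rightarrow> (nat \<Rightarrow> 'a) set" where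
  "Dsub C U = {c\<in>C. \<forall>i\<in>U. c i = 0}"

lemma Dsub_subspace: "fv.subspace C \<Longrightarrow> fv.subspace (Dsub C U)"
  unfolding Dsub_def fv.subspace_def by auto

lemma Dsub_insert: "Dsub C (insert j U) = {c\<in>Dsub C U. c j = 0}"
  unfolding Dsub_def by auto

lemma dimP:
  assumes C: "fv.subspace C" "C \<subseteq> {c. fin n c}" and P: "finite P"
  shows "fv.dim (Dsub C U) \<le> fv.dim (Dsub C (U \<union> P)) + card P"
  using P
proof (induction P rule: finite_induct)
  case empty thus ?case by simp
next
  case (insert j P)
  have "fv.dim (Dsub C (U \<union> P)) \<le> fv.dim {c\<in>Dsub C (U \<union> P). c j = 0} + 1"
    by (rule dim_hyper[of _ n]) (use C Dsub_subspace in \<open>auto simp: Dsub_def\<close>)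
  also have "{c\<in>Dsub C (U \<union> P). c j = 0} = Dsub C (U \<union> insert j P)"
    using Dsub_insert[of C j "U \<union> P"] by simp
  finally show ?case using insert by simp
qed

lemma lrc_bound:
  fixes C :: "(nat \<Rightarrow> 'a::field) set"
  assumes C: "fv.subspace C" "C \<subseteq> {c. fin n c}" and k: "k = fv.dim C"
    and grp: "\<forall>j<n. \<exists>S. S \<subseteq> {..<n} \<and> j \<in> S \<and> card S \<le> r + \<delta> - 1 \<and>
                (\<forall>x\<in>C. {i\<in>S. x i \<noteq> 0} \<noteq> {} \<longrightarrow> card {i\<in>S. x i \<noteq> 0} \<ge> \<delta>)"
    and d1: "\<delta> \<ge> 1" and sr: "s * r < k" and kn: "k - 1 + s * (\<delta> - 1) \<le> n"
  shows "\<exists>c\<in>C. c \<noteq> 0 \<and> card {i. i < n \<and> c i \<noteq> 0} \<le> n - (k - 1 + s * (\<delta> - 1))"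
proof -
  have ph1: "\<exists>U p. U \<subseteq> {..<n} \<and> p \<le> l * r \<and> card U = p + l * (\<delta> - 1) \<and> fv.dim (Dsub C U) + p \<ge> k"
    if "l \<le> s" for l
    using that
  proof (induction l)
    case 0
    show ?case by (rule exI[of _ "{}"], rule exI[of _ 0]) (simp add: Dsub_def k)
  next
    case (Suc l)
    then obtain U p where U: "U \<subseteq> {..<n}" "p \<le> l * r" "card U = p + l * (\<delta> - 1)"
      "fv.dim (Dsub C U) + p \<ge> k" by auto
    have fU: "finite U" using U(1) finite_subset by blast
    have "Suc l * r \<le> s * r" using Suc(2) by (rule mult_le_mono1)
    then have "l * r + r \<le> s * r" by simp
    then have "fv.dim (Dsub C U) \<ge> 1" using U(2,4) sr by linarith
    then obtain c where c: "c \<in> Dsub C U" "c \<noteq> 0" using dim_pos_nonzero by blast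
    then obtain j where j: "c j \<noteq> 0" by (auto simp: fun_eq_iff)
    have "c \<in> C" "fin n c" using c(1) C(2) by (auto simp: Dsub_def)
    then have jn: "j < n" using j unfolding fin_def by (meson not_le)
    have jU: "j \<notin> U" using c(1) j by (auto simp: Dsub_def)
    obtain S where S: "S \<subseteq> {..<n}" "j \<in> S" "card S \<le> r + \<delta> - 1"
      "\<forall>x\<in>C. {i\<in>S. x i \<noteq> 0} \<noteq> {} \<longrightarrow> card {i\<in>S. x i \<noteq> 0} \<ge> \<delta>"
      using grp[rule_format, OF jn] by blast
    have fS: "finite S" using S(1) finite_subset by blast
    have "{i\<in>S. c i \<noteq> 0} \<subseteq> S - U" using c(1) by (auto simp: Dsub_def)
    moreover have "{i\<in>S. c i \<noteq> 0} \<noteq> {}" using S(2) j by blast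
    then have "card {i\<in>S. c i \<noteq> 0} \<ge> \<delta>" using S(4) \<open>c \<in> C\<close> by blast
    moreover have "card {i\<in>S. c i \<noteq> 0} \<le> card (S - U)"
      by (rule card_mono) (use fS \<open>{i\<in>S. c i \<noteq> 0} \<subseteq> S - U\<close> in auto)
    ultimately have cSU: "card (S - U) \<ge> \<delta>" by linarith
    obtain P where P: "P \<subseteq> S - U" "card P = card (S - U) - (\<delta> - 1)" "finite P"
      using obtain_subset_with_card_n[of "card (S - U) - (\<delta> - 1)" "S - U"] by auto
    have DP: "Dsub C (U \<union> S) = Dsub C (U \<union> P)"
    proof
      show "Dsub C (U \<union> S) \<subseteq> Dsub C (U \<union> P)" using P(1) by (auto simp: Dsub_def)
    next
      show "Dsub C (U \<union> P) \<subseteq> Dsub C (U \<union> S)"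
      proof
        fix x assume x: "x \<in> Dsub C (U \<union> P)"
        have "{i\<in>S. x i \<noteq> 0} \<subseteq> (S - U) - P" using x by (auto simp: Dsub_def)
        then have "card {i\<in>S. x i \<noteq> 0} \<le> card ((S - U) - P)" using fS by (intro card_mono) auto
        also have "\<dots> = \<delta> - 1" using P cSU fS by (simp add: card_Diff_subset)
        finally have "{i\<in>S. x i \<noteq> 0} = {}" using S(4) x d1 by (auto simp: Dsub_def)
        then show "x \<in> Dsub C (U \<union> S)" using x by (auto simp: Dsub_def)
      qed
    qed
    have "card (S - U) \<le> card S" using fS by (intro card_mono) auto
    then have cP: "card P \<le> r" using P(2) S(3) by linarith
    have cU': "card (U \<union> S) = card U + card (S - U)"
    proof -
      have "U \<union> S = U \<union> (S - U)" by blast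
      moreover have "card (U \<union> (S - U)) = card U + card (S - U)"
        using fU fS by (intro card_Un_disjoint) auto
      ultimately show ?thesis by simp
    qed
    have "fv.dim (Dsub C U) \<le> fv.dim (Dsub C (U \<union> P)) + card P" by (rule dimP[OF C P(3)])
    have a1: "U \<union> S \<subseteq> {..<n}" using U(1) S(1) by blast
    have a2: "p + card P \<le> Suc l * r" using U(2) cP by simp
    have a3: "card (U \<union> S) = (p + card P) + Suc l * (\<delta> - 1)"
      using cU' U(3) P(2) cSU d1 by simp
    have a4: "fv.dim (Dsub C (U \<union> S)) + (p + card P) \<ge> k"
      unfolding DP using U(4) \<open>fv.dim (Dsub C U) \<le> fv.dim (Dsub C (U \<union> P)) + card P\<close> by linarith
    show ?case using a1 a2 a3 a4 by blast
  qed
  obtain U p where U: "U \<subseteq> {..<n}" "p \<le> s * r" "card U = p + s * (\<delta> - 1)"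
      "fv.dim (Dsub C U) + p \<ge> k" using ph1[of s] by auto
  have fU: "finite U" using U(1) finite_subset by blast
  have "card ({..<n} - U) = n - card U" using U(1) by (simp add: card_Diff_subset fU)
  moreover have "k - 1 - p \<le> n - card U" using U(2,3) sr kn by linarith
  ultimately obtain E where E: "E \<subseteq> {..<n} - U" "card E = k - 1 - p" "finite E"
    using obtain_subset_with_card_n[of "k - 1 - p" "{..<n} - U"] by metis
  have "fv.dim (Dsub C U) \<le> fv.dim (Dsub C (U \<union> E)) + card E" by (rule dimP[OF C E(3)])
  then have "fv.dim (Dsub C (U \<union> E)) \<ge> 1" using U(2,4) E(2) sr by linarith
  then obtain c where c: "c \<in> Dsub C (U \<union> E)" "c \<noteq> 0" using dim_pos_nonzero by blast
  have "{i. i < n \<and> c i \<noteq> 0} \<subseteq> {..<n} - (U \<union> E)" using c(1) by (auto simp: Dsub_def)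
  then have "card {i. i < n \<and> c i \<noteq> 0} \<le> card ({..<n} - (U \<union> E))" by (intro card_mono) auto
  also have "\<dots> = n - card (U \<union> E)" using U(1) E(1) fU E(3) by (subst card_Diff_subset) auto
  also have "card (U \<union> E) = card U + card E" using E fU by (subst card_Un_disjoint) auto
  finally have "card {i. i < n \<and> c i \<noteq> 0} \<le> n - (k - 1 + s * (\<delta> - 1))"
    using U(2,3) E(2) sr by simp
  then show ?thesis using c by (auto simp: Dsub_def)
qed



definition prim :: "nat \<Rightarrow> 'a::field \<Rightarrow> bool" where
  "prim n x \<longleftrightarrow> x ^ n = 1 \<and> (\<forall>j. 0 < j \<and> j < n \<longrightarrow> x ^ j \<noteq> 1)"

lemma prim_nz: "n > 0 \<Longrightarrow> prim n x \<Longrightarrow> x \<noteq> 0"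
  unfolding prim_def by (auto simp: power_0_left)

lemma pow_mod: "x ^ n = (1::'a::field) \<Longrightarrow> x ^ e = x ^ (e mod n)"
proof -
  assume "x ^ n = 1"
  have "x ^ e = x ^ (n * (e div n) + e mod n)" by simp
  also have "\<dots> = (x ^ n) ^ (e div n) * x ^ (e mod n)" by (simp only: power_add power_mult)
  finally show ?thesis using \<open>x ^ n = 1\<close> by simp
qed

lemma prim_one_dvd: "n > 0 \<Longrightarrow> prim n x \<Longrightarrow> x ^ e = 1 \<Longrightarrow> n dvd e"
proof -
  assume n: "n > 0" and p: "prim n x" and e: "x ^ e = 1"
  have "x ^ (e mod n) = 1" using pow_mod[of x n e] p e by (simp add: prim_def)
  moreover have "e mod n < n" using n by simp
  ultimately have "e mod n = 0" using p unfolding prim_def by (meson neq0_conv)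
  then show ?thesis by (simp add: dvd_eq_mod_eq_0)
qed

lemma prim_inj:
  assumes "n > 0" "prim n x" "i < n" "j < n" "x ^ i = x ^ j"
  shows "i = j"
proof (rule ccontr)
  assume "i \<noteq> j"
  then consider "i < j" | "j < i" by linarith
  then show False
  proof cases
    case 1
    have "x ^ i * x ^ (j - i) = x ^ j" using 1 by (simp add: power_add[symmetric])
    then have "x ^ i * x ^ (j - i) = x ^ i * 1" using assms(5) by simp
    then have "x ^ (j - i) = 1" using prim_nz[OF assms(1,2)] by simp
    then show False using assms 1 unfolding prim_def by auto
  next
    case 2
    have "x ^ j * x ^ (i - j) = x ^ i" using 2 by (simp add: power_add[symmetric])
    then have "x ^ j * x ^ (i - j) = x ^ j * 1" using assms(5) by simp
    then have "x ^ (i - j) = 1" using prim_nz[OF assms(1,2)] by simp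
    then show False using assms 2 unfolding prim_def by auto
  qed
qed

lemma prim_coprime:
  assumes "n > 0" "prim n x" "coprime b n"
  shows "prim n (x ^ b)"
  unfolding prim_def
proof (intro conjI allI impI)
  show "(x ^ b) ^ n = 1" using assms(2) unfolding prim_def by (metis power_mult mult.commute power_one)
next
  fix j assume j: "0 < j \<and> j < n"
  show "(x ^ b) ^ j \<noteq> 1"
  proof
    assume "(x ^ b) ^ j = 1"
    then have "n dvd b * j" using prim_one_dvd[OF assms(1,2)] by (simp add: power_mult)
    then have "n dvd j" using assms(3) by (simp add: coprime_dvd_mult_right_iff coprime_commute)
    then show False using j by (auto dest: dvd_imp_le)
  qed
qed

lemma prim_inverse:
  assumes "prim n x"
  shows "prim n (inverse x)"
  using assms unfolding prim_def by (auto simp: power_inverse)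

lemma root_pow: "x ^ n = (1::'a::field) \<Longrightarrow> (x ^ e) ^ n = 1"
  by (metis power_mult mult.commute power_one)

lemma egam:
  fixes Z :: "'a::{field,finite} set"
  assumes n: "n > 0" and Z: "\<forall>z\<in>Z. z ^ n = 1" and g: "\<gamma> ^ n = 1" "\<forall>z\<in>Z. \<gamma> * z \<noteq> 1"
  shows "(\<lambda>i. if i < n then \<gamma> ^ i else 0) \<in> cyclic_code n Z"
  unfolding cyc_iff[OF n Z]
proof (intro conjI ballI)
  show "fin n (\<lambda>i. if i < n then \<gamma> ^ i else 0)" by (simp add: fin_def)
next
  fix z assume z: "z \<in> Z"
  have "ev n (\<lambda>i. if i < n then \<gamma> ^ i else 0) z = (\<Sum>i<n. (\<gamma> * z) ^ i)"
    by (simp add: ev_def power_mult_distrib)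
  also have "\<dots> = ((\<gamma> * z) ^ n - 1) / (\<gamma> * z - 1)" using g(2) z by (simp add: geometric_sum)
  also have "\<dots> = 0" using g(1) Z z by (simp add: power_mult_distrib)
  finally show "ev n (\<lambda>i. if i < n then \<gamma> ^ i else 0) z = 0" .
qed

lemma dualvec:
  fixes Z :: "'a::{field,finite} set"
  assumes n: "n > 0" and Z: "\<forall>z\<in>Z. z ^ n = 1" and b: "\<beta> \<in> Z"
  shows "(\<lambda>i. if i < n then \<beta> ^ i else 0) \<in> dual_code n (cyclic_code n Z)"
  unfolding dual_code_def
proof (intro CollectI conjI allI impI ballI)
  fix c assume "c \<in> cyclic_code n Z"
  then have "ev n c \<beta> = 0" using cyc_iff[OF n Z] b by auto
  then show "(\<Sum>i<n. c i * (if i < n then \<beta> ^ i else 0)) = 0" by (simp add: ev_def)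
qed simp

definition rot :: "nat \<Rightarrow> nat \<Rightarrow> (nat \<Rightarrow> 'a::zero) \<Rightarrow> nat \<Rightarrow> 'a" where
  "rot n a c i = (if i < n then c ((i + a) mod n) else 0)"

lemma rot_bij: "(n::nat) > 0 \<Longrightarrow> bij_betw (\<lambda>i. (i + (a::nat)) mod n) {..<n} {..<n}"
proof -
  assume n: "n > 0"
  have inj: "inj_on (\<lambda>i. (i + a) mod n) {..<n}"
  proof (rule inj_onI)
    fix i j assume ij: "i \<in> {..<n}" "j \<in> {..<n}" "(i + a) mod n = (j + a) mod n"
    show "i = j"
    proof (rule ccontr)
      assume "i \<noteq> j"
      then consider "i < j" | "j < i" by linarith
      then show False
      proof cases
        case 1
        then have "n dvd (j + a) - (i + a)" using ij(3) mod_eq_dvd_iff_nat[of "i + a" "j + a" n] by simp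
        then have "n dvd j - i" by simp
        then show False using 1 ij(2) by (auto dest: dvd_imp_le)
      next
        case 2
        then have "n dvd (i + a) - (j + a)" using ij(3) mod_eq_dvd_iff_nat[of "j + a" "i + a" n] by simp
        then have "n dvd i - j" by simp
        then show False using 2 ij(1) by (auto dest: dvd_imp_le)
      qed
    qed
  qed
  moreover have "(\<lambda>i. (i + a) mod n) ` {..<n} \<subseteq> {..<n}" using n by auto
  moreover have "card ((\<lambda>i. (i + a) mod n) ` {..<n}) = card {..<n}" using inj by (simp add: card_image)
  ultimately show ?thesis unfolding bij_betw_def by (metis card_subset_eq finite_lessThan)
qed

lemma sum_rot: "(n::nat) > 0 \<Longrightarrow> (\<Sum>i<n. f ((i + (a::nat)) mod n)) = (\<Sum>i<n. f i)"
  using sum.reindex_bij_betw[OF rot_bij[of n a], where g=f] by simp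

lemma rot_cyc:
  fixes Z :: "'a::{field,finite} set"
  assumes n: "n > 0" and Z: "\<forall>z\<in>Z. z ^ n = 1" and c: "c \<in> cyclic_code n Z"
  shows "rot n a c \<in> cyclic_code n Z"
  unfolding cyc_iff[OF n Z]
proof (intro conjI ballI)
  show "fin n (rot n a c)" by (simp add: fin_def rot_def)
next
  fix z assume z: "z \<in> Z"
  have zn: "z ^ n = 1" using Z z by auto
  have z0: "z \<noteq> 0" using zn n by (auto simp: power_0_left)
  have "z ^ a * ev n (rot n a c) z = (\<Sum>i<n. c ((i + a) mod n) * z ^ ((i + a) mod n))"
    unfolding ev_def rot_def sum_distrib_left
    by (rule sum.cong[OF refl]) (simp add: pow_mod[OF zn, of "_ + a", symmetric] power_add mult_ac)
  also have "\<dots> = ev n c z" unfolding ev_def by (rule sum_rot[OF n])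
  also have "\<dots> = 0" using c z cyc_iff[OF n Z] by auto
  finally show "ev n (rot n a c) z = 0" using z0 by simp
qed

lemma rot_dual:
  fixes Z :: "'a::{field,finite} set"
  assumes n: "n > 0" and Z: "\<forall>z\<in>Z. z ^ n = 1" and y: "y \<in> dual_code n (cyclic_code n Z)"
  shows "rot n a y \<in> dual_code n (cyclic_code n Z)"
  unfolding dual_code_def
proof (intro CollectI conjI allI impI ballI)
  fix c assume c: "c \<in> cyclic_code n Z"
  define a' where "a' = n - a mod n"
  have cr: "rot n a' c \<in> cyclic_code n Z" by (rule rot_cyc[OF n Z c])
  have key: "((i + a) mod n + a') mod n = i" if "i < n" for i
  proof -
    have "((i + a) mod n + a') mod n = (i + a + a') mod n" by (simp add: mod_add_left_eq)
    also have "i + a + a' = i + (a div n) * n + n"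
    proof -
      have "a mod n < n" using n by simp
      moreover have "a div n * n + a mod n = a" by (rule div_mult_mod_eq)
      ultimately show ?thesis unfolding a'_def by arith
    qed
    also have "(i + (a div n) * n + n) mod n = i" using that by simp
    finally show ?thesis .
  qed
  let ?f = "\<lambda>i. rot n a' c i * y i"
  have "(\<Sum>i<n. c i * rot n a y i) = (\<Sum>i<n. ?f ((i + a) mod n))"
    by (rule sum.cong[OF refl]) (use n key in \<open>simp add: rot_def\<close>)
  also have "\<dots> = (\<Sum>i<n. ?f i)" by (rule sum_rot[OF n])
  also have "\<dots> = 0" using y cr by (auto simp: dual_code_def)
  finally show "(\<Sum>i<n. c i * rot n a y i) = 0" .
qed (simp add: rot_def)



lemma pow_swap: "((x::'a::field) ^ i) ^ j = (x ^ j) ^ i"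
  by (simp add: power_mult[symmetric] mult.commute)

lemma bch:
  fixes y :: "nat \<Rightarrow> 'a::field"
  assumes n: "n > 0" and p: "prim n \<omega>" and c: "c \<noteq> 0" and y: "fin n y"
    and S: "\<forall>e<D. (\<Sum>i<n. y i * (c * \<omega> ^ e) ^ i) = 0" and ne: "\<exists>i<n. y i \<noteq> 0"
  shows "card {i. i < n \<and> y i \<noteq> 0} \<ge> D + 1"
proof (rule ccontr)
  define W where "W = {i. i < n \<and> y i \<noteq> 0}"
  assume "\<not> ?thesis"
  then have cW: "card W \<le> D" by (simp add: W_def)
  have fW: "finite W" by (simp add: W_def)
  have inj: "inj_on (\<lambda>i. \<omega> ^ i) W"
    by (rule inj_onI) (use prim_inj[OF n p] in \<open>auto simp: W_def\<close>)
  have "\<forall>j<D. (\<Sum>i\<in>W. (y i * c ^ i) * (\<omega> ^ i) ^ j) = 0"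
  proof (intro allI impI)
    fix j assume j: "j < D"
    have "(\<Sum>i\<in>W. (y i * c ^ i) * (\<omega> ^ i) ^ j) = (\<Sum>i<n. y i * (c * \<omega> ^ j) ^ i)"
    proof (rule sum.mono_neutral_cong_left)
      show "\<forall>i\<in>{..<n} - W. y i * (c * \<omega> ^ j) ^ i = 0" by (auto simp: W_def)
      fix i assume "i \<in> W"
      have e: "(\<omega> ^ i) ^ j = (\<omega> ^ j) ^ i" by (rule pow_swap)
      show "y i * c ^ i * (\<omega> ^ i) ^ j = y i * (c * \<omega> ^ j) ^ i"
        unfolding power_mult_distrib e by (simp only: mult.assoc)
    qed (auto simp: W_def)
    then show "(\<Sum>i\<in>W. (y i * c ^ i) * (\<omega> ^ i) ^ j) = 0" using S j by simp
  qed
  then have "\<forall>i\<in>W. y i * c ^ i = 0" using vand[OF fW inj cW, where y="\<lambda>i. y i * c ^ i"] by simp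
  then have "W = {}" using c by (auto simp: W_def)
  then show False using ne by (auto simp: W_def)
qed

lemma grp_prop:
  fixes ZA ZB :: "'a::{field,finite} set"
  assumes n: "n > 0" and p: "prim n \<omega>" and ZA: "\<forall>z\<in>ZA. z ^ n = 1" and ZB: "\<forall>z\<in>ZB. z ^ n = 1"
    and AB: "\<forall>\<beta>\<in>ZA. \<forall>j<D. \<beta> * \<omega> ^ j \<in> ZB"
    and y: "y \<in> dual_code n (cyclic_code n ZA)" and x: "x \<in> cyclic_code n ZB"
    and ne: "{i. i < n \<and> x i \<noteq> 0 \<and> y i \<noteq> 0} \<noteq> {}"
  shows "card {i. i < n \<and> x i \<noteq> 0 \<and> y i \<noteq> 0} \<ge> D + 1"
proof (rule ccontr)
  define W where "W = {i. i < n \<and> x i \<noteq> 0 \<and> y i \<noteq> 0}"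
  assume "\<not> ?thesis"
  then have cW: "card W \<le> D" by (simp add: W_def)
  have fW: "finite W" by (simp add: W_def)
  have inj: "inj_on (\<lambda>i. \<omega> ^ i) W"
    by (rule inj_onI) (use prim_inj[OF n p] in \<open>auto simp: W_def\<close>)
  have xc: "fin n x" "\<forall>z\<in>ZB. ev n x z = 0" using x cyc_iff[OF n ZB] by auto
  have "\<forall>j<D. (\<Sum>i\<in>W. (x i * y i) * (\<omega> ^ i) ^ j) = 0"
  proof (intro allI impI)
    fix j assume j: "j < D"
    define x' where "x' = (\<lambda>i. x i * (\<omega> ^ j) ^ i)"
    have "x' \<in> cyclic_code n ZA"
      unfolding cyc_iff[OF n ZA]
    proof (intro conjI ballI)
      show "fin n x'" using xc(1) by (simp add: fin_def x'_def)
    next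
      fix \<beta> assume b: "\<beta> \<in> ZA"
      have "ev n x' \<beta> = ev n x (\<beta> * \<omega> ^ j)"
        by (simp add: ev_def x'_def power_mult_distrib mult_ac)
      also have "\<dots> = 0" using xc(2) AB b j by auto
      finally show "ev n x' \<beta> = 0" .
    qed
    then have "(\<Sum>i<n. x' i * y i) = 0" using y by (auto simp: dual_code_def)
    moreover have "(\<Sum>i\<in>W. (x i * y i) * (\<omega> ^ i) ^ j) = (\<Sum>i<n. x' i * y i)"
    proof (rule sum.mono_neutral_cong_left)
      show "\<forall>i\<in>{..<n} - W. x' i * y i = 0" by (auto simp: W_def x'_def)
      fix i assume "i \<in> W"
      have e: "(\<omega> ^ i) ^ j = (\<omega> ^ j) ^ i" by (rule pow_swap)
      show "x i * y i * (\<omega> ^ i) ^ j = x' i * y i"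
        unfolding x'_def e by (simp only: mult_ac)
    qed (auto simp: W_def)
    ultimately show "(\<Sum>i\<in>W. (x i * y i) * (\<omega> ^ i) ^ j) = 0" by simp
  qed
  then have "\<forall>i\<in>W. x i * y i = 0" using vand[OF fW inj cW, where y="\<lambda>i. x i * y i"] by simp
  then have "W = {}" by (auto simp: W_def)
  then show False using ne by (auto simp: W_def)
qed



lemma cyc_subspace:
  fixes Z :: "'a::{field,finite} set"
  assumes n: "n > 0" and Z: "\<forall>z\<in>Z. z ^ n = 1"
  shows "fv.subspace (cyclic_code n Z)"
proof -
  have e1: "ev n (x + y) z = ev n x z + ev n y z" for x y :: "nat \<Rightarrow> 'a" and z by (simp add: ev_def distrib_right sum.distrib)
  have e2: "ev n (\<lambda>i. a * x i) z = a * ev n x z" for x :: "nat \<Rightarrow> 'a" and a z by (simp add: ev_def sum_distrib_left mult_ac)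
  have e0: "ev n 0 z = 0" for z :: 'a by (simp add: ev_def)
  show ?thesis by (auto simp: fv.subspace_def cyc_iff[OF n Z] fin_def e0 e1 e2)
qed

lemma cyc_fin:
  fixes Z :: "'a::{field,finite} set"
  assumes n: "n > 0" and Z: "\<forall>z\<in>Z. z ^ n = 1"
  shows "cyclic_code n Z \<subseteq> {c. fin n c}"
  using cyc_iff[OF n Z] by auto



theorem theorem4p1:
  fixes \<alpha> :: "'a::{field,finite}"
    and n \<delta> b s m t :: nat and i :: "nat \<Rightarrow> nat"
  assumes "n dvd (card (UNIV :: 'a set) - 1)"
    and "\<alpha> ^ n = 1" and "\<forall>j. 0 < j \<and> j < n \<longrightarrow> \<alpha> ^ j \<noteq> 1"
    and "\<delta> \<ge> 2" and "b \<ge> 1" and "s \<ge> 1" and "m \<ge> 1" and "coprime b n"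
    and "t < n"
    and "m - 1 + \<delta> \<le> i 1" and "i s + \<delta> \<le> n"
    and "\<forall>l. 1 \<le> l \<and> l < s \<longrightarrow> i l + \<delta> \<le> i (l + 1)"
  defines "A \<equiv> {\<alpha> ^ (t + j * b) | j. j < m} \<union> {\<alpha> ^ (t + i l * b) | l. 1 \<le> l \<and> l \<le> s}"
    and "B \<equiv> {\<alpha> ^ (j * b) | j. j \<le> \<delta> - 2}"
  defines "C \<equiv> cyclic_code n (set_prod A B)"
    and "k \<equiv> code_dim (cyclic_code n (set_prod A B))"
    and "r \<equiv> min_dist {..<n} (dual_code n (cyclic_code n A)) + 1 - \<delta>"
  shows "is_LRC n C r \<delta> \<and>
         int k = int n - int m + 1 - (int s + 1) * (int \<delta> - 1) \<and>
         (\<lceil>real k / real r\<rceil> = int s + 1 \<longrightarrow>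
            is_optimal_LRC n C r \<delta> \<and> min_dist {..<n} C = m + \<delta> - 1)"
proof -
  note d2 = assms(4) and m1 = assms(7) and s1 = assms(6)
  have n0: "n > 0" using assms(11) assms(4) by linarith
  have pa: "prim n \<alpha>" using assms(2,3) by (simp add: prim_def)
  define \<omega> where "\<omega> = \<alpha> ^ b"
  have pw: "prim n \<omega>" unfolding \<omega>_def by (rule prim_coprime[OF n0 pa assms(8)])
  have a0: "\<alpha> \<noteq> 0" by (rule prim_nz[OF n0 pa])
  have w0: "\<omega> \<noteq> 0" by (rule prim_nz[OF n0 pw])
  define f where "f e = \<alpha> ^ t * \<omega> ^ e" for e
  have wb: "\<alpha> ^ (e * b) = \<omega> ^ e" for e
    unfolding \<omega>_def by (simp add: power_mult[symmetric] mult.commute)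
  have fe: "\<alpha> ^ (t + e * b) = f e" for e
    unfolding f_def power_add wb ..
  have fadd: "f (a + c) = f a * \<omega> ^ c" for a c by (simp add: f_def power_add mult.assoc)
  have froot: "f e ^ n = 1" for e
    using pa pw unfolding f_def prim_def by (simp add: power_mult_distrib root_pow)
  have finj: "f e = f e' \<Longrightarrow> e < n \<Longrightarrow> e' < n \<Longrightarrow> e = e'" for e e'
    using prim_inj[OF n0 pw, of e e'] a0 by (simp add: f_def)
  have imono: "i l + \<delta> \<le> i l'" if "1 \<le> l" "l < l'" "l' \<le> s" for l l'
    using that
  proof (induction l')
    case 0 then show ?case by simp
  next
    case (Suc l'')
    have st: "i l'' + \<delta> \<le> i (l'' + 1)" using assms(12) Suc.prems by auto
    show ?case
    proof (cases "l = l''")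
      case True then show ?thesis using st by simp
    next
      case False
      then have "i l + \<delta> \<le> i l''" using Suc by auto
      then show ?thesis using st by simp
    qed
  qed
  have ile: "i l \<le> i s" if "1 \<le> l" "l \<le> s" for l
    using imono[of l s] that by (cases "l = s") auto
  have i1: "i 1 \<le> i l" if "1 \<le> l" "l \<le> s" for l
    using imono[of 1 l] that by (cases "l = 1") auto
  define EA where "EA = {..<m} \<union> i ` {1..s}"
  define E where "E = {..<m + \<delta> - 2} \<union> (\<lambda>(l, c). i l + c) ` ({1..s} \<times> {..\<delta> - 2})"
  have Af: "A = f ` EA"
    unfolding A_def EA_def fe by auto
  have Bf: "B = (\<lambda>c. \<omega> ^ c) ` {..\<delta> - 2}"
    unfolding B_def wb by auto
  have EAn: "EA \<subseteq> {..<n}"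
  proof
    fix e assume "e \<in> EA"
    then consider "e < m" | l where "1 \<le> l" "l \<le> s" "e = i l" by (auto simp: EA_def)
    then show "e \<in> {..<n}"
    proof cases
      case 1 then show ?thesis using assms(10,11) ile[of 1] s1 d2 by auto
    next
      case 2 then show ?thesis using assms(11) ile[of l] d2 by auto
    qed
  qed
  have En: "e \<le> n - 2" if "e \<in> E" for e
  proof -
    from that consider "e < m + \<delta> - 2" | l c where "1 \<le> l" "l \<le> s" "c \<le> \<delta> - 2" "e = i l + c"
      by (auto simp: E_def)
    then show ?thesis
    proof cases
      case 1 then show ?thesis using assms(10,11) ile[of 1] s1 by auto
    next
      case 2 then show ?thesis using assms(11) ile[of l] d2 by auto
    qed
  qed
  have ABf: "set_prod A B = f ` E"
  proof
    show "set_prod A B \<subseteq> f ` E"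
    proof
      fix x assume "x \<in> set_prod A B"
      then obtain a c where ac: "a \<in> EA" "c \<le> \<delta> - 2" "x = f a * \<omega> ^ c"
        unfolding set_prod_def Af Bf by auto
      then have x: "x = f (a + c)" by (simp add: fadd)
      from ac(1) consider "a < m" | l where "1 \<le> l" "l \<le> s" "a = i l" by (auto simp: EA_def)
      then have "a + c \<in> E"
      proof cases
        case 1 then show ?thesis using ac(2) d2 by (auto simp: E_def)
      next
        case 2 then show ?thesis using ac(2) unfolding E_def by force
      qed
      then show "x \<in> f ` E" using x by auto
    qed
  next
    show "f ` E \<subseteq> set_prod A B"
    proof
      fix x assume "x \<in> f ` E"
      then obtain e where e: "e \<in> E" "x = f e" by auto
      from e(1) consider "e < m + \<delta> - 2" | l c where "1 \<le> l" "l \<le> s" "c \<le> \<delta> - 2" "e = i l + c"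
        by (auto simp: E_def)
      then obtain a c where ac: "a \<in> EA" "c \<le> \<delta> - 2" "e = a + c"
      proof cases
        case 1
        show ?thesis
          by (rule that[of "min e (m - 1)" "e - min e (m - 1)"]) (use 1 m1 in \<open>auto simp: EA_def\<close>)
      next
        case 2
        show ?thesis by (rule that[of "i l" c]) (use 2 in \<open>auto simp: EA_def\<close>)
      qed
      have "f a \<in> A" "\<omega> ^ c \<in> B" using ac Af Bf by auto
      then show "x \<in> set_prod A B" unfolding set_prod_def using e(2) ac(3) fadd by blast
    qed
  qed
  have cardE: "card E = (m + \<delta> - 2) + s * (\<delta> - 1)"
  proof -
    let ?g = "\<lambda>(l, c). i l + c"
    have inj: "inj_on ?g ({1..s} \<times> {..\<delta> - 2})"
    proof (rule inj_onI)
      fix x y assume xy: "x \<in> {1..s} \<times> {..\<delta> - 2}" "y \<in> {1..s} \<times> {..\<delta> - 2}" "?g x = ?g y"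
      obtain l c where x: "x = (l, c)" by (cases x)
      obtain l' c' where y: "y = (l', c')" by (cases y)
      have h: "1 \<le> l" "l \<le> s" "c \<le> \<delta> - 2" "1 \<le> l'" "l' \<le> s" "c' \<le> \<delta> - 2" "i l + c = i l' + c'"
        using xy unfolding x y by auto
      show "x = y"
      proof (cases "l = l'")
        case True then show ?thesis using h x y by simp
      next
        case False
        then consider "l < l'" | "l' < l" by linarith
        then show ?thesis
        proof cases
          case 1 then show ?thesis using imono[of l l'] h d2 by linarith
        next
          case 2 then show ?thesis using imono[of l' l] h d2 by linarith
        qed
      qed
    qed
    have disj: "{..<m + \<delta> - 2} \<inter> ?g ` ({1..s} \<times> {..\<delta> - 2}) = {}"
      using i1 assms(10) by fastforce
    have "card E = card {..<m + \<delta> - 2} + card (?g ` ({1..s} \<times> {..\<delta> - 2}))"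
      unfolding E_def by (rule card_Un_disjoint) (use disj in auto)
    also have "card (?g ` ({1..s} \<times> {..\<delta> - 2})) = s * (\<delta> - 1)"
    proof -
      define d' where "d' = \<delta> - 2"
      have "\<delta> = Suc (Suc d')" using d2 unfolding d'_def by simp
      then show ?thesis using inj by (simp add: card_image card_cartesian_product)
    qed
    finally show ?thesis by simp
  qed
  have cardAB: "card (set_prod A B) = (m + \<delta> - 2) + s * (\<delta> - 1)"
  proof -
    have "inj_on f E" by (rule inj_onI) (use finj En n0 in \<open>fastforce\<close>)
    then show ?thesis unfolding ABf using cardE by (simp add: card_image)
  qed

  have ZA: "\<forall>z\<in>A. z ^ n = 1" using Af froot by auto
  have ZB: "\<forall>z\<in>set_prod A B. z ^ n = 1" using ABf froot by auto
  have cABn: "card (set_prod A B) < n"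
  proof -
    have "card E \<le> card {..n-2}" using En by (intro card_mono) auto
    then show ?thesis using cardE cardAB n0 d2 assms(11) by simp
  qed
  have kdim: "k = fv.dim C" unfolding k_def C_def code_dim_def ..
  have kval: "k = n - card (set_prod A B)"
    using dim_cyc[OF n0 ZB] cABn unfolding k_def code_dim_def by simp
  have kint: "int k = int n - int m + 1 - (int s + 1) * (int \<delta> - 1)"
  proof -
    have "int (card (set_prod A B)) = int m + int \<delta> - 2 + int s * (int \<delta> - 1)"
      using cardAB d2 by (simp add: of_nat_diff)
    moreover have "int k = int n - int (card (set_prod A B))" using kval cABn by simp
    ultimately show ?thesis by (simp add: algebra_simps)
  qed
  have AB': "\<forall>\<beta>\<in>A. \<forall>j<\<delta> - 1. \<beta> * \<omega> ^ j \<in> set_prod A B"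
  proof (intro ballI allI impI)
    fix \<beta> j assume "\<beta> \<in> A" "j < \<delta> - 1"
    moreover have "\<omega> ^ j \<in> B" using \<open>j < \<delta> - 1\<close> Bf by auto
    ultimately show "\<beta> * \<omega> ^ j \<in> set_prod A B" unfolding set_prod_def by blast
  qed
  have wt_eq: "wt {..<n} c = card {i. i < n \<and> c i \<noteq> 0}" for c :: "nat \<Rightarrow> 'a"
    by (simp add: wt_def)
  define Cd where "Cd = dual_code n (cyclic_code n A)"
  define dd where "dd = min_dist {..<n} Cd"
  have rdd: "r = dd + 1 - \<delta>" unfolding r_def dd_def Cd_def ..
  define WD where "WD = {wt {..<n} c | c. c \<in> Cd \<and> wt {..<n} c \<noteq> 0}"
  have EA0: "0 \<in> EA" using m1 by (simp add: EA_def)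
  have "(\<lambda>i. if i < n then f 0 ^ i else 0) \<in> Cd"
    unfolding Cd_def by (rule dualvec[OF n0 ZA]) (use Af EA0 in auto)
  moreover have "wt {..<n} (\<lambda>i. if i < n then f 0 ^ i else 0) \<noteq> 0"
  proof -
    have "0 \<in> {i. i < n \<and> (if i < n then f 0 ^ i else 0) \<noteq> 0}" using n0 by simp
    moreover have fin: "finite {i. i < n \<and> (if i < n then f 0 ^ i else 0) \<noteq> 0}" by simp
    ultimately show ?thesis unfolding wt_eq using card_0_eq[OF fin] by auto
  qed
  ultimately have WDne: "WD \<noteq> {}" unfolding WD_def by blast
  have lowD: "wt {..<n} y \<ge> \<delta>" if y: "y \<in> Cd" "wt {..<n} y \<noteq> 0" for y
  proof -
    have yf: "fin n y" using y(1) by (auto simp: Cd_def dual_code_def fin_def)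
    have "{i. i < n \<and> y i \<noteq> 0} \<noteq> {}" using y(2) unfolding wt_eq by (intro notI) simp
    then have ne: "\<exists>i<n. y i \<noteq> 0" by blast
    have fm0: "inverse (f m) \<noteq> 0" using a0 w0 by (simp add: f_def)
    have S: "\<forall>e<\<delta> - 1. (\<Sum>i<n. y i * (inverse (f m) * inverse \<omega> ^ e) ^ i) = 0"
    proof (intro allI impI)
      fix e assume e: "e < \<delta> - 1"
      define \<gamma> where "\<gamma> = inverse (f (m + e))"
      have g: "inverse (f m) * inverse \<omega> ^ e = \<gamma>"
        unfolding \<gamma>_def fadd by (simp add: power_inverse)
      have gn: "\<gamma> ^ n = 1" unfolding \<gamma>_def using froot by (simp add: power_inverse)
      have me: "m + e < i 1" "i 1 < n" using e assms(10) assms(11) ile[of 1] s1 d2 by auto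
      have gz: "\<forall>z\<in>A. \<gamma> * z \<noteq> 1"
      proof
        fix z assume "z \<in> A"
        then obtain e' where e': "e' \<in> EA" "z = f e'" using Af by auto
        show "\<gamma> * z \<noteq> 1"
        proof
          assume "\<gamma> * z = 1"
          moreover have "f (m + e) \<noteq> 0" using a0 w0 by (simp add: f_def)
          ultimately have "f e' = f (m + e)" unfolding \<gamma>_def e'(2)
            by (metis mult.assoc mult.left_neutral mult.right_neutral right_inverse)
          then have eq: "e' = m + e" using finj EAn e'(1) me by auto
          from e'(1) consider "e' < m" | l where "1 \<le> l" "l \<le> s" "e' = i l"
            by (auto simp: EA_def)
          then show False
          proof cases
            case 1 then show False using eq by simp
          next
            case 2 then show False using i1[of l] me eq by auto
          qed
        qed
      qed
      have "(\<lambda>i. if i < n then \<gamma> ^ i else 0) \<in> cyclic_code n A" by (rule egam[OF n0 ZA gn gz])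
      then have "(\<Sum>i<n. (if i < n then \<gamma> ^ i else 0) * y i) = 0"
        using y(1) by (auto simp: Cd_def dual_code_def)
      then show "(\<Sum>i<n. y i * (inverse (f m) * inverse \<omega> ^ e) ^ i) = 0"
        unfolding g by (simp add: mult.commute)
    qed
    have "card {i. i < n \<and> y i \<noteq> 0} \<ge> \<delta> - 1 + 1"
      by (rule bch[OF n0 prim_inverse[OF pw] fm0 yf S ne])
    then show ?thesis unfolding wt_eq using d2 by simp
  qed
  have ddWD: "dd \<in> WD" unfolding dd_def min_dist_def WD_def[symmetric] using WDne by (rule Inf_nat_def1)
  then obtain y0 where y0: "y0 \<in> Cd" "wt {..<n} y0 = dd" "dd \<noteq> 0" unfolding WD_def by auto
  have dd_ge: "dd \<ge> \<delta>" using lowD[OF y0(1)] y0(2,3) by simp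
  have r1: "r \<ge> 1" and rd: "r + \<delta> - 1 = dd" using dd_ge d2 rdd by auto

  have CZ: "C = cyclic_code n (set_prod A B)" by (simp add: C_def)
  obtain i0 where i0: "i0 < n" "y0 i0 \<noteq> 0"
  proof -
    have "{i. i < n \<and> y0 i \<noteq> 0} \<noteq> {}" using y0(2,3) unfolding wt_eq by (intro notI) simp
    then show ?thesis using that by blast
  qed
  have grp: "\<exists>S. S \<subseteq> {..<n} \<and> j \<in> S \<and> card S \<le> dd \<and>
      (\<forall>x\<in>C. {i\<in>S. x i \<noteq> 0} \<noteq> {} \<longrightarrow> card {i\<in>S. x i \<noteq> 0} \<ge> \<delta>)" if j: "j < n" for j
  proof -
    define a where "a = i0 + n - j"
    define y1 where "y1 = rot n a y0"
    define S where "S = {i. i < n \<and> y1 i \<noteq> 0}"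
    have y1d: "y1 \<in> Cd" unfolding y1_def Cd_def by (rule rot_dual[OF n0 ZA]) (use y0(1) in \<open>simp add: Cd_def\<close>)
    have "(j + a) mod n = i0" using j i0(1) by (simp add: a_def)
    then have jS: "j \<in> S" using j i0 by (simp add: S_def y1_def rot_def)
    have cS: "card S \<le> dd"
    proof -
      have "inj_on (\<lambda>i. (i + a) mod n) S"
        using rot_bij[OF n0, of a] unfolding bij_betw_def S_def by (auto intro: inj_on_subset)
      moreover have "(\<lambda>i. (i + a) mod n) ` S \<subseteq> {i. i < n \<and> y0 i \<noteq> 0}"
        using n0 by (auto simp: S_def y1_def rot_def)
      ultimately have "card S \<le> card {i. i < n \<and> y0 i \<noteq> 0}" by (intro card_inj_on_le) auto
      then show ?thesis using y0(2) wt_eq by simp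
    qed
    have G: "card {i\<in>S. x i \<noteq> 0} \<ge> \<delta>" if x: "x \<in> C" "{i\<in>S. x i \<noteq> 0} \<noteq> {}" for x
    proof -
      have eqS: "{i\<in>S. x i \<noteq> 0} = {i. i < n \<and> x i \<noteq> 0 \<and> y1 i \<noteq> 0}" by (auto simp: S_def)
      have "card {i. i < n \<and> x i \<noteq> 0 \<and> y1 i \<noteq> 0} \<ge> \<delta> - 1 + 1"
        by (rule grp_prop[OF n0 pw ZA ZB AB']) (use y1d x eqS in \<open>auto simp: Cd_def CZ\<close>)
      then show ?thesis using eqS d2 by simp
    qed
    show ?thesis using jS cS G by (intro exI[of _ S]) (auto simp: S_def)
  qed
  define \<gamma>0 where "\<gamma>0 = inverse (f (n - 1))"
  have g00: "\<gamma>0 \<noteq> 0" using a0 w0 by (simp add: \<gamma>0_def f_def)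
  have x0C: "(\<lambda>i. if i < n then \<gamma>0 ^ i else 0) \<in> C"
    unfolding CZ
  proof (rule egam[OF n0 ZB])
    show "\<gamma>0 ^ n = 1" unfolding \<gamma>0_def using froot by (simp add: power_inverse)
    show "\<forall>z\<in>set_prod A B. \<gamma>0 * z \<noteq> 1"
    proof
      fix z assume "z \<in> set_prod A B"
      then obtain e where e: "e \<in> E" "z = f e" using ABf by auto
      show "\<gamma>0 * z \<noteq> 1"
      proof
        assume "\<gamma>0 * z = 1"
        moreover have "f (n - 1) \<noteq> 0" using a0 w0 by (simp add: f_def)
        ultimately have "f e = f (n - 1)" unfolding \<gamma>0_def e(2)
          by (metis mult.assoc mult.left_neutral mult.right_neutral right_inverse)
        then have "e = n - 1" using finj En[OF e(1)] n0 d2 assms(11) by fastforce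
        then show False using En[OF e(1)] n0 d2 assms(11) by simp
      qed
    qed
  qed
  have loc: "has_locality n C r \<delta> j" if j: "j < n" for j
  proof -
    obtain S where S: "S \<subseteq> {..<n}" "j \<in> S" "card S \<le> dd"
      "\<forall>x\<in>C. {i\<in>S. x i \<noteq> 0} \<noteq> {} \<longrightarrow> card {i\<in>S. x i \<noteq> 0} \<ge> \<delta>"
      using grp[OF j] by blast
    have fS: "finite S" using S(1) finite_subset by blast
    have "min_dist S (puncture S C) \<ge> \<delta>"
      unfolding min_dist_def
    proof (rule cInf_greatest)
      let ?p = "\<lambda>i. if i \<in> S then (if i < n then \<gamma>0 ^ i else 0) else 0"
      have "?p \<in> puncture S C" unfolding puncture_def using x0C by (intro image_eqI[OF refl])
      moreover have "{i\<in>S. ?p i \<noteq> 0} = S" using S(1) g00 by auto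
      then have "wt S ?p = card S" by (simp add: wt_def)
      moreover have "card S \<noteq> 0" using fS S(2) by auto
      ultimately show "{wt S c |c. c \<in> puncture S C \<and> wt S c \<noteq> 0} \<noteq> {}" by auto
    next
      fix w assume "w \<in> {wt S c |c. c \<in> puncture S C \<and> wt S c \<noteq> 0}"
      then obtain x where x: "x \<in> C" "w = wt S (\<lambda>i. if i \<in> S then x i else 0)"
        "wt S (\<lambda>i. if i \<in> S then x i else 0) \<noteq> 0" unfolding puncture_def by auto
      have eq: "{i\<in>S. (if i \<in> S then x i else 0) \<noteq> 0} = {i\<in>S. x i \<noteq> 0}" by auto
      have "{i\<in>S. x i \<noteq> 0} \<noteq> {}" using x(3) unfolding wt_def eq by (intro notI) simp
      then show "\<delta> \<le> w" using S(4) x(1) unfolding x(2) wt_def eq by blast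
    qed
    then show ?thesis unfolding has_locality_def using S(1,2,3) rd by auto
  qed
  have LRC: "is_LRC n C r \<delta>" unfolding is_LRC_def using r1 d2 loc by auto
  have lowC: "wt {..<n} x \<ge> m + \<delta> - 1" if x: "x \<in> C" "wt {..<n} x \<noteq> 0" for x
  proof -
    have xc: "fin n x" "\<forall>z\<in>set_prod A B. ev n x z = 0" using x(1) cyc_iff[OF n0 ZB] CZ by auto
    have "{i. i < n \<and> x i \<noteq> 0} \<noteq> {}" using x(2) unfolding wt_eq by (intro notI) simp
    then have ne: "\<exists>i<n. x i \<noteq> 0" by blast
    have at0: "\<alpha> ^ t \<noteq> 0" using a0 by simp
    have S: "\<forall>e<m + \<delta> - 2. (\<Sum>i<n. x i * (\<alpha> ^ t * \<omega> ^ e) ^ i) = 0"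
    proof (intro allI impI)
      fix e assume "e < m + \<delta> - 2"
      then have "f e \<in> set_prod A B" using ABf by (auto simp: E_def)
      then have "ev n x (f e) = 0" using xc by auto
      then show "(\<Sum>i<n. x i * (\<alpha> ^ t * \<omega> ^ e) ^ i) = 0" by (simp add: ev_def f_def)
    qed
    have "card {i. i < n \<and> x i \<noteq> 0} \<ge> m + \<delta> - 2 + 1" by (rule bch[OF n0 pw at0 xc(1) S ne])
    then show ?thesis unfolding wt_eq using d2 m1 by simp
  qed
  have opt: "is_optimal_LRC n C r \<delta> \<and> min_dist {..<n} C = m + \<delta> - 1"
    if ceil: "\<lceil>real k / real r\<rceil> = int s + 1"
  proof -
    have "real s < real k / real r" using ceil by (simp add: ceiling_eq_iff)
    then have "real s * real r < real k" using r1 by (simp add: pos_less_divide_eq)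
    then have sr: "s * r < k" by (metis of_nat_less_iff of_nat_mult)
    have kX: "k + s * (\<delta> - 1) + (m + \<delta> - 2) = n" using kval cardAB cABn by auto
    have k1: "k \<ge> 1" using kval cABn by arith
    have kn: "k - 1 + s * (\<delta> - 1) \<le> n" using kX k1 by linarith
    have grp': "\<forall>j<n. \<exists>S. S \<subseteq> {..<n} \<and> j \<in> S \<and> card S \<le> r + \<delta> - 1 \<and>
                (\<forall>x\<in>C. {i\<in>S. x i \<noteq> 0} \<noteq> {} \<longrightarrow> card {i\<in>S. x i \<noteq> 0} \<ge> \<delta>)"
      using grp rd by auto
    obtain c where c: "c \<in> C" "c \<noteq> 0" "card {i. i < n \<and> c i \<noteq> 0} \<le> n - (k - 1 + s * (\<delta> - 1))"
      using lrc_bound[OF cyc_subspace[OF n0 ZB, folded CZ] cyc_fin[OF n0 ZB, folded CZ] kdim grp' _ sr kn] d2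
      by auto
    have nk: "n - (k - 1 + s * (\<delta> - 1)) = m + \<delta> - 1" using kX k1 d2 m1 by linarith
    have cf: "fin n c" using c(1) cyc_fin[OF n0 ZB] CZ by auto
    have "{i. i < n \<and> c i \<noteq> 0} \<noteq> {}"
    proof
      assume "{i. i < n \<and> c i \<noteq> 0} = {}"
      then have "c = 0" using cf by (auto simp: fun_eq_iff fin_def not_less)
      then show False using c(2) by simp
    qed
    then have wc0: "wt {..<n} c \<noteq> 0" unfolding wt_eq by simp
    define WC where "WC = {wt {..<n} c |c. c \<in> C \<and> wt {..<n} c \<noteq> 0}"
    have "wt {..<n} c \<in> WC" using c(1) wc0 by (auto simp: WC_def)
    then have le: "min_dist {..<n} C \<le> m + \<delta> - 1"
      unfolding min_dist_def WC_def[symmetric] using c(3) nk wt_eq[of c]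
      by (metis (no_types, lifting) cInf_lower bdd_below_bot le_trans)
    have ge: "min_dist {..<n} C \<ge> m + \<delta> - 1"
      unfolding min_dist_def WC_def[symmetric]
    proof (rule cInf_greatest)
      show "WC \<noteq> {}" using \<open>wt {..<n} c \<in> WC\<close> by blast
      show "\<And>w. w \<in> WC \<Longrightarrow> m + \<delta> - 1 \<le> w" using lowC by (auto simp: WC_def)
    qed
    have md: "min_dist {..<n} C = m + \<delta> - 1" using le ge by simp
    have "code_dim C = k" unfolding k_def C_def ..
    then have "int (min_dist {..<n} C) = int n - int (code_dim C) - (\<lceil>real (code_dim C) / real r\<rceil> - 1) * (int \<delta> - 1) + 1"
      using md ceil kint d2 m1 by (simp add: algebra_simps of_nat_diff)
    then show ?thesis using LRC md unfolding is_optimal_LRC_def by simp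
  qed
  show ?thesis using LRC kint opt by blast
qed

end
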